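(* Let $\mathbf A\in\mathcal S_{++}^n$, $\tau>0$, and fix $\mathbf W\in\mathbb R^{k\times n}$. Let $t\mapsto\mathbf M(t)\in\mathcal S_{++}^k$ be a continuously differentiable solution of $$\tau\tfrac{d\mathbf M}{dt}=\mathbf M^{-1}\mathbf W\mathbf A\mathbf W^\top\mathbf M^{-1}-\mathbf M.$$ Then, with $L_0(\mathbf W,\mathbf M):=\|\mathbf W\mathbf A\mathbf W^\top-\mathbf M^3\|^2$, the following identity holds: $$\tau\frac{d}{dt}L_0(\mathbf W,\mathbf M(t))=-4\big\|\mathbf M^{1/2}(\mathbf W\mathbf A\mathbf W^\top-\mathbf M^3)\mathbf M^{-1/2}\big\|^2-2L_0(\mathbf W,\mathbf M(t)),$$ where $\mathbf M=\mathbf M(t)$ on the right-hand side. In particular $\tau\frac{d}{dt}L_0\le-2L_0$, so $L_0(\mathbf W,\mathbf M(t))\le L_0(\mathbf W,\mathbf M(0))e^{-2t/\tau}$.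
   Context: Let $n>k\ge1$ be integers. $\mathcal S_{++}^m$ denotes the $m\times m$ symmetric positive definite matrices, and $\mathbf A\in\mathcal S_{++}^n$. $\|\cdot\|$ is the Frobenius norm, and $\mathbf M^{1/2}$ is the positive definite square root. *)

theory Defs
  imports "HOL-Analysis.Analysis"
begin

definition spd :: "real^'m^'m \<Rightarrow> bool" where
  "spd M \<longleftrightarrow> transpose M = M \<and> (\<forall>x. x \<noteq> 0 \<longrightarrow> x \<bullet> (M *v x) > 0)"

definition pd_sqrt :: "real^'m^'m \<Rightarrow> real^'m^'m" where
  "pd_sqrt M = (THE S. spd S \<and> S ** S = M)"

definition frob :: "real^'c^'r \<Rightarrow> real" where
  "frob X = sqrt (\<Sum>i\<in>UNIV. \<Sum>j\<in>UNIV. (X $ i $ j)^2)"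

definition L0 :: "real^'n^'n \<Rightarrow> real^'n^'k \<Rightarrow> real^'k^'k \<Rightarrow> real" where
  "L0 A W M = (frob (W ** A ** transpose W - M ** M ** M))^2"

end

theory Submission
  imports Defs
begin


lemma sym_inner:
  fixes A :: "real^'m^'m"
  assumes "transpose A = A"
  shows "x \<bullet> (A *v y) = (A *v x) \<bullet> y"
proof -
  have "x \<bullet> (A *v y) = (x v* A) \<bullet> y" by (rule dot_lmul_matrix[symmetric])
  also have "x v* A = transpose A *v x" by simp
  finally show ?thesis using assms by simp
qed

lemma frob_sq: "(frob X)^2 = X \<bullet> X"
proof -
  have "(\<Sum>i\<in>UNIV. \<Sum>j\<in>UNIV. (X $ i $ j)^2) \<ge> 0" by (intro sum_nonneg) auto
  then show ?thesis
    by (simp add: frob_def inner_vec_def power2_eq_square)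
qed

lemma inner_trace:
  fixes X Y :: "real^'m^'m"
  shows "X \<bullet> Y = trace (transpose X ** Y)"
  unfolding inner_vec_def trace_def matrix_matrix_mult_def transpose_def
  by simp (rule sum.swap)

lemma invertible_inv:
  fixes A :: "real^'m^'m"
  assumes "invertible A"
  shows "A ** matrix_inv A = mat 1" "matrix_inv A ** A = mat 1"
proof -
  have "\<exists>A'. A ** A' = mat 1 \<and> A' ** A = mat 1" using assms unfolding invertible_def by blast
  from someI_ex[OF this] show "A ** matrix_inv A = mat 1" "matrix_inv A ** A = mat 1"
    unfolding matrix_inv_def by auto
qed

lemma inv_unique:
  fixes A B :: "real^'m^'m"
  assumes "B ** A = mat 1" "invertible A"
  shows "matrix_inv A = B"
proof -
  have "matrix_inv A = (B ** A) ** matrix_inv A" using assms(1) by simp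
  also have "\<dots> = B ** (A ** matrix_inv A)" by (simp add: matrix_mul_assoc)
  also have "\<dots> = B" using invertible_inv(1)[OF assms(2)] by simp
  finally show ?thesis .
qed

lemma spd_invertible:
  fixes M :: "real^'m^'m"
  assumes "spd M"
  shows "invertible M"
proof -
  have "\<forall>x. M *v x = 0 \<longrightarrow> x = 0"
  proof (intro allI impI)
    fix x assume h: "M *v x = 0"
    show "x = 0"
    proof (rule ccontr)
      assume "x \<noteq> 0"
      then have "x \<bullet> (M *v x) > 0" using assms unfolding spd_def by blast
      then show False using h by simp
    qed
  qed
  then have "\<exists>B. B ** M = mat 1" by (simp only: matrix_left_invertible_ker)
  then show ?thesis by (simp only: invertible_left_inverse)
qed

lemma transpose_inv_sym:
  fixes S :: "real^'m^'m"
  assumes "transpose S = S" "invertible S"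
  shows "transpose (matrix_inv S) = matrix_inv S"
proof -
  have "transpose (matrix_inv S) ** S = transpose (S ** matrix_inv S)"
    using assms(1) by (simp add: matrix_transpose_mul)
  also have "\<dots> = mat 1" using invertible_inv(1)[OF assms(2)] by simp
  finally have "transpose (matrix_inv S) ** S = mat 1" .
  from inv_unique[OF this assms(2)] show ?thesis by (rule HOL.sym)
qed



lemma rayleigh_eig:
  fixes A :: "real^'m^'m"
  assumes sym: "transpose A = A" and sub: "subspace V"
    and inv: "\<And>x. x \<in> V \<Longrightarrow> A *v x \<in> V" and nz: "V \<noteq> {0}"
  shows "\<exists>v\<in>V. norm v = 1 \<and> A *v v = (v \<bullet> (A *v v)) *\<^sub>R v"
proof -
  let ?K = "V \<inter> sphere 0 1"
  have "compact ?K" using closed_subspace[OF sub] compact_sphere by (intro closed_Int_compact) auto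
  obtain u where u: "u \<in> V" "u \<noteq> 0" using nz sub subspace_0 by blast
  then have "u /\<^sub>R norm u \<in> ?K" using subspace_scale sub by auto
  then have "?K \<noteq> {}" by blast
  moreover have "continuous_on UNIV (\<lambda>x. x \<bullet> (A *v x))"
    by (intro continuous_on_inner continuous_on_id bounded_linear.continuous_on[OF matrix_vector_mul_bounded_linear])
  then have "continuous_on ?K (\<lambda>x. x \<bullet> (A *v x))" using continuous_on_subset by blast
  ultimately have "\<exists>v\<in>?K. \<forall>x\<in>?K. x \<bullet> (A *v x) \<le> v \<bullet> (A *v v)"
    using continuous_attains_sup[OF \<open>compact ?K\<close>] by blast
  then obtain v where vK: "v \<in> ?K" and vmax: "\<And>x. x \<in> ?K \<Longrightarrow> x \<bullet> (A *v x) \<le> v \<bullet> (A *v v)"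
    by blast
  define l where "l = v \<bullet> (A *v v)"
  have vV: "v \<in> V" and vn: "norm v = 1" using vK by auto
  have vv: "v \<bullet> v = 1" using vn by (simp add: norm_eq_1)
  define q where "q x = l * (x \<bullet> x) - x \<bullet> (A *v x)" for x
  have qnn: "q x \<ge> 0" if "x \<in> V" for x
  proof (cases "x = 0")
    case True then show ?thesis by (simp add: q_def)
  next
    case False
    let ?y = "x /\<^sub>R norm x"
    have "?y \<in> ?K" using that False subspace_scale[OF sub] by auto
    then have "?y \<bullet> (A *v ?y) \<le> l" using vmax l_def by blast
    moreover have "?y \<bullet> (A *v ?y) = (x \<bullet> (A *v x)) / (norm x)^2"
      using False by (simp add: matrix_vector_mult_scaleR power2_eq_square field_simps)
    moreover have "x \<bullet> x = (norm x)^2" by (simp add: power2_norm_eq_inner)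
    moreover have "(norm x)^2 > 0" using False by simp
    ultimately show ?thesis unfolding q_def
      by (simp add: divide_le_eq mult.commute)
  qed
  define w where "w = l *\<^sub>R v - A *v v"
  have wV: "w \<in> V" unfolding w_def by (rule subspace_diff[OF sub subspace_scale[OF sub vV] inv[OF vV]])
  have qv: "q v = 0" unfolding q_def l_def using vv by simp
  have ww: "w \<bullet> w = l * (v \<bullet> w) - (A *v v) \<bullet> w"
    by (subst (1) w_def) (simp add: inner_diff_left)
  have key: "q (v + t *\<^sub>R w) = 2 * t * (w \<bullet> w) + t^2 * q w" for t
  proof -
    have e1: "(v + t *\<^sub>R w) \<bullet> (A *v (v + t *\<^sub>R w)) = v \<bullet> (A *v v) + t * (v \<bullet> (A *v w)) + t * (w \<bullet> (A *v v)) + t^2 * (w \<bullet> (A *v w))"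
    proof -
      have "A *v (v + t *\<^sub>R w) = A *v v + t *\<^sub>R (A *v w)"
        by (simp only: matrix_vector_right_distrib matrix_vector_mult_scaleR)
      then show ?thesis
        by (simp only: inner_add_left inner_add_right inner_scaleR_left inner_scaleR_right) (simp add: power2_eq_square distrib_left)
    qed
    have e2: "(v + t *\<^sub>R w) \<bullet> (v + t *\<^sub>R w) = v \<bullet> v + 2 * t * (v \<bullet> w) + t^2 * (w \<bullet> w)"
      by (simp only: inner_add_left inner_add_right inner_scaleR_left inner_scaleR_right inner_commute[of w v]) (simp add: power2_eq_square algebra_simps)
    have e3: "v \<bullet> (A *v w) = (A *v v) \<bullet> w" by (rule sym_inner[OF sym])
    have e4: "w \<bullet> (A *v v) = (A *v v) \<bullet> w" by (rule inner_commute)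
    have alg: "l * (vv' + 2 * t * vw + t^2 * ww') - (vAv + t * X + t * X + t^2 * Y) = 2 * t * ww' + t^2 * (l * ww' - Y)"
      if "vv' = 1" "ww' = l * vw - X" "l = vAv" for vv' ww' vw vAv X Y :: real
      unfolding that(1,2) using that(3) by (simp add: algebra_simps power2_eq_square)
    show ?thesis unfolding q_def e1 e2 e3 e4
      by (rule alg[OF vv ww l_def])
  qed
  have "w \<bullet> w = 0"
  proof (rule ccontr)
    assume "w \<bullet> w \<noteq> 0"
    then have a: "w \<bullet> w > 0" by (simp add: order_less_le)
    define a where "a = w \<bullet> w"
    define b where "b = q w"
    have b: "b \<ge> 0" using qnn wV b_def by simp
    define t where "t = - a / (b + 1)"
    have vtw: "v + t *\<^sub>R w \<in> V" by (rule subspace_add[OF sub vV subspace_scale[OF sub wV]])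
    have "0 \<le> 2 * t * a + t^2 * b" using qnn[OF vtw] key[of t] unfolding a_def b_def by simp
    moreover have "2 * t * a + t^2 * b < 0"
    proof -
      have c: "b + 1 > 0" using b by simp
      have apos: "a > 0" using a a_def by simp
      have tneg: "t < 0" unfolding t_def using c apos by (simp add: divide_pos_pos)
      have "a * b / (b + 1) \<le> a" using c apos by (simp add: pos_divide_le_eq algebra_simps)
      then have "t * b \<ge> - a" unfolding t_def by simp
      then have "2 * a + t * b > 0" using apos by linarith
      then have "t * (2 * a + t * b) < 0" using tneg by (simp add: mult_neg_pos)
      moreover have "2 * t * a + t^2 * b = t * (2 * a + t * b)" by (simp add: algebra_simps power2_eq_square)
      ultimately show ?thesis by simp
    qed
    ultimately show False by linarith
  qed
  then have "w = 0" by simp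
  then have "l *\<^sub>R v - A *v v = 0" by (simp only: w_def)
  then have "l *\<^sub>R v = A *v v" by (simp only: right_minus_eq)
  then have Av: "A *v v = l *\<^sub>R v" by (rule HOL.sym)
  have "(v \<bullet> (A *v v)) *\<^sub>R v = l *\<^sub>R v" by (simp only: l_def[symmetric])
  with Av have "A *v v = (v \<bullet> (A *v v)) *\<^sub>R v" by (rule trans[OF _ HOL.sym])
  with vn have "norm v = 1 \<and> A *v v = (v \<bullet> (A *v v)) *\<^sub>R v" by (rule conjI)
  with vV show ?thesis by (rule bexI[rotated])
qed



lemma orth_coef:
  fixes B :: "'a::euclidean_space set"
  assumes fin: "finite B" and po: "pairwise orthogonal B" and uB: "u \<in> B" and un: "norm u = 1"
  shows "u \<bullet> (\<Sum>v\<in>B. a v *\<^sub>R v) = a u"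
proof -
  have s0: "(\<Sum>v\<in>B - {u}. a v * (u \<bullet> v)) = 0"
  proof (rule sum.neutral, rule ballI)
    fix v assume v: "v \<in> B - {u}"
    have "v \<in> B" "u \<noteq> v" using v by auto
    then have "orthogonal u v" by (rule pairwiseD[OF po uB])
    then have "u \<bullet> v = 0" unfolding orthogonal_def .
    then show "a v * (u \<bullet> v) = 0" by simp
  qed
  have uu: "u \<bullet> u = 1" using un by (simp add: norm_eq_1)
  have "u \<bullet> (\<Sum>v\<in>B. a v *\<^sub>R v) = (\<Sum>v\<in>B. a v * (u \<bullet> v))"
    by (simp add: inner_sum_right)
  also have "\<dots> = a u * (u \<bullet> u) + (\<Sum>v\<in>B - {u}. a v * (u \<bullet> v))"
    by (rule sum.remove[OF fin uB])
  also have "\<dots> = a u" unfolding s0 uu by simp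
  finally show ?thesis .
qed

lemma orth_expand:
  fixes B :: "'a::euclidean_space set"
  assumes po: "pairwise orthogonal B" and un: "\<forall>v\<in>B. norm v = 1" and sp: "span B = UNIV"
  shows "x = (\<Sum>v\<in>B. (v \<bullet> x) *\<^sub>R v)"
proof -
  have fin: "finite B" using pairwise_orthogonal_imp_finite[OF po] .
  define y where "y = x - (\<Sum>v\<in>B. (v \<bullet> x) *\<^sub>R v)"
  have "orthogonal y u" if "u \<in> B" for u
  proof -
    have "norm u = 1" using un that by blast
    from orth_coef[OF fin po that this, of "\<lambda>v. v \<bullet> x"]
    have "u \<bullet> (\<Sum>v\<in>B. (v \<bullet> x) *\<^sub>R v) = u \<bullet> x" .
    then have "u \<bullet> y = 0" unfolding y_def by (simp add: inner_diff_right)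
    then show ?thesis unfolding orthogonal_def by (simp add: inner_commute)
  qed
  moreover have "y \<in> span B" using sp by simp
  ultimately have "orthogonal y y" using orthogonal_to_span by blast
  then have "y = 0" unfolding orthogonal_def by simp
  then show ?thesis unfolding y_def by simp
qed

lemma spectral_sub:
  fixes A :: "real^'m^'m"
  assumes sym: "transpose A = A"
  shows "subspace V \<Longrightarrow> (\<forall>x\<in>V. A *v x \<in> V) \<Longrightarrow> \<exists>B. B \<subseteq> V \<and> pairwise orthogonal B \<and>
     (\<forall>v\<in>B. norm v = 1 \<and> (\<exists>c. A *v v = c *\<^sub>R v)) \<and> span B = V"
proof (induction "dim V" arbitrary: V rule: less_induct)
  case less
  show ?case
  proof (cases "V = {0}")
    case True
    then show ?thesis by (intro exI[of _ "{}"]) auto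
  next
    case False
    have "\<exists>v\<in>V. norm v = 1 \<and> A *v v = (v \<bullet> (A *v v)) *\<^sub>R v"
      using rayleigh_eig[OF sym less.prems(1) _ False] less.prems(2) by blast
    then obtain v where vV: "v \<in> V" and vn: "norm v = 1" and Av: "A *v v = (v \<bullet> (A *v v)) *\<^sub>R v"
      by blast
    have vv: "v \<bullet> v = 1" using vn by (simp add: norm_eq_1)
    define V' where "V' = {x \<in> V. v \<bullet> x = 0}"
    have sub': "subspace V'" using less.prems(1) unfolding V'_def subspace_def
      by (auto simp: inner_add_right)
    have inv': "\<forall>x\<in>V'. A *v x \<in> V'"
    proof
      fix x assume x: "x \<in> V'"
      have "v \<bullet> (A *v x) = (A *v v) \<bullet> x" by (rule sym_inner[OF sym])
      also have "\<dots> = (v \<bullet> (A *v v)) * (v \<bullet> x)" by (subst Av) simp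
      also have "\<dots> = 0" using x unfolding V'_def by simp
      finally show "A *v x \<in> V'" using x less.prems(2) unfolding V'_def by simp
    qed
    have "v \<notin> V'" using vv unfolding V'_def by simp
    moreover have "V' \<subseteq> V" unfolding V'_def by auto
    ultimately have "V' \<subset> V" using vV by blast
    moreover have sp1: "span V' = V'" using sub' by (simp only: span_eq_iff)
    moreover have sp2: "span V = V" using less.prems(1) by (simp only: span_eq_iff)
    ultimately have "span V' \<subset> span V" by (subst sp1, subst sp2)
    then have "dim V' < dim V" by (rule dim_psubset)
    from less.hyps[OF this sub' inv'] obtain B' where
      B': "B' \<subseteq> V'" "pairwise orthogonal B'"
        "\<forall>v\<in>B'. norm v = 1 \<and> (\<exists>c. A *v v = c *\<^sub>R v)" "span B' = V'"
      by blast
    let ?B = "insert v B'"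
    have "?B \<subseteq> V" using B'(1) vV unfolding V'_def by auto
    moreover have "pairwise orthogonal ?B"
    proof -
      have "\<forall>y\<in>B'. orthogonal v y \<and> orthogonal y v"
        using B'(1) unfolding V'_def orthogonal_def by (auto simp: inner_commute)
      then show ?thesis using B'(2) by (auto simp: pairwise_insert)
    qed
    moreover have "\<forall>u\<in>?B. norm u = 1 \<and> (\<exists>c. A *v u = c *\<^sub>R u)"
      using B'(3) vn Av by blast
    moreover have "span ?B = V"
    proof
      show "span ?B \<subseteq> V" using \<open>?B \<subseteq> V\<close> less.prems(1) by (rule span_minimal)
      show "V \<subseteq> span ?B"
      proof
        fix x assume x: "x \<in> V"
        let ?z = "x - (v \<bullet> x) *\<^sub>R v"
        have "?z \<in> V" by (rule subspace_diff[OF less.prems(1) x subspace_scale[OF less.prems(1) vV]])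
        moreover have "v \<bullet> ?z = 0" using vv by (simp add: inner_diff_right)
        ultimately have "?z \<in> V'" unfolding V'_def by blast
        then have "?z \<in> span B'" using B'(4) by simp
        then have z: "?z \<in> span ?B" using span_mono[of B' ?B] by blast
        have "(v \<bullet> x) *\<^sub>R v \<in> span ?B" by (intro span_mul span_base) simp
        from span_add[OF z this] show "x \<in> span ?B" by simp
      qed
    qed
    ultimately show ?thesis by blast
  qed
qed

lemma spectral:
  fixes A :: "real^'m^'m"
  assumes sym: "transpose A = A"
  obtains B where "finite B" "pairwise orthogonal B" "\<forall>v\<in>B. norm v = 1"
    "\<forall>v\<in>B. A *v v = (v \<bullet> (A *v v)) *\<^sub>R v" "span B = UNIV"
proof -
  have "\<exists>B. B \<subseteq> UNIV \<and> pairwise orthogonal B \<and>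
     (\<forall>v\<in>B. norm v = 1 \<and> (\<exists>c. A *v v = c *\<^sub>R v)) \<and> span B = UNIV"
    by (rule spectral_sub[OF sym]) auto
  then obtain B where po: "pairwise orthogonal B" and h: "\<forall>v\<in>B. norm v = 1 \<and> (\<exists>c. A *v v = c *\<^sub>R v)"
    and sp: "span B = UNIV" by blast
  have h1: "\<forall>v\<in>B. norm v = 1" using h by blast
  have h2: "\<forall>v\<in>B. A *v v = (v \<bullet> (A *v v)) *\<^sub>R v"
  proof
    fix v assume v: "v \<in> B"
    then obtain c where c: "A *v v = c *\<^sub>R v" using h by blast
    have "v \<bullet> v = 1" using h v by (simp add: norm_eq_1)
    then have "v \<bullet> (A *v v) = c" by (simp add: c)
    then show "A *v v = (v \<bullet> (A *v v)) *\<^sub>R v" using c by simp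
  qed
  show ?thesis by (rule that[OF pairwise_orthogonal_imp_finite[OF po] po h1 h2 sp])
qed



lemma mv_sum:
  fixes A :: "real^'n^'m"
  shows "A *v (\<Sum>v\<in>B. f v) = (\<Sum>v\<in>B. A *v f v)"
proof (induction B rule: infinite_finite_induct)
  case (insert x F)
  then show ?case by (simp add: matrix_vector_right_distrib)
qed simp_all

definition smat :: "(real^'m \<Rightarrow> real) \<Rightarrow> (real^'m) set \<Rightarrow> real^'m^'m" where
  "smat c B = (\<chi> i j. \<Sum>v\<in>B. c v * v$i * v$j)"

lemma smat_transpose: "transpose (smat c B) = smat c B"
  unfolding smat_def transpose_def by (simp add: vec_eq_iff mult_ac)

lemma smat_mult: "smat c B *v x = (\<Sum>v\<in>B. (c v * (v \<bullet> x)) *\<^sub>R v)"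
proof -
  have "(smat c B *v x) $ i = (\<Sum>v\<in>B. (c v * (v \<bullet> x)) *\<^sub>R v) $ i" for i
  proof -
    have "(smat c B *v x) $ i = (\<Sum>j\<in>UNIV. (\<Sum>v\<in>B. c v * v$i * v$j) * x$j)"
      unfolding smat_def matrix_vector_mult_def by simp
    also have "\<dots> = (\<Sum>j\<in>UNIV. \<Sum>v\<in>B. c v * v$i * v$j * x$j)"
      by (simp add: sum_distrib_right)
    also have "\<dots> = (\<Sum>v\<in>B. \<Sum>j\<in>UNIV. c v * v$i * v$j * x$j)"
      by (rule sum.swap)
    also have "\<dots> = (\<Sum>v\<in>B. (c v * (v \<bullet> x)) * v $ i)"
      unfolding inner_vec_def by (simp add: sum_distrib_left mult_ac)
    also have "\<dots> = (\<Sum>v\<in>B. (c v * (v \<bullet> x)) *\<^sub>R v) $ i"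
      by (simp add: sum_component)
    finally show ?thesis .
  qed
  then show ?thesis by (simp add: vec_eq_iff)
qed

lemma sqrt_exists:
  fixes M :: "real^'m^'m"
  assumes "spd M"
  shows "\<exists>S. spd S \<and> S ** S = M"
proof -
  have symM: "transpose M = M" using assms unfolding spd_def by blast
  have posM: "\<And>x. x \<noteq> 0 \<Longrightarrow> x \<bullet> (M *v x) > 0" using assms unfolding spd_def by blast
  obtain B where fin: "finite B" and po: "pairwise orthogonal B" and un: "\<forall>v\<in>B. norm v = 1"
    and ev: "\<forall>v\<in>B. M *v v = (v \<bullet> (M *v v)) *\<^sub>R v" and sp: "span B = UNIV"
    using spectral[OF symM] by blast
  define l where "l v = v \<bullet> (M *v v)" for v
  have lpos: "l v > 0" if "v \<in> B" for v
  proof -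
    have "v \<noteq> 0" using un that by auto
    then show ?thesis unfolding l_def by (rule posM)
  qed
  have Mv: "M *v v = l v *\<^sub>R v" if "v \<in> B" for v using ev that unfolding l_def by blast
  define c where "c v = sqrt (l v)" for v
  define S where "S = smat c B"
  have Mx: "M *v x = (\<Sum>v\<in>B. (l v * (v \<bullet> x)) *\<^sub>R v)" for x
  proof -
    have "M *v x = M *v (\<Sum>v\<in>B. (v \<bullet> x) *\<^sub>R v)" using orth_expand[OF po un sp, of x] by simp
    also have "\<dots> = (\<Sum>v\<in>B. M *v ((v \<bullet> x) *\<^sub>R v))" by (rule mv_sum)
    also have "\<dots> = (\<Sum>v\<in>B. (l v * (v \<bullet> x)) *\<^sub>R v)"
    proof (rule sum.cong[OF refl])
      fix v assume "v \<in> B"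
      then show "M *v ((v \<bullet> x) *\<^sub>R v) = (l v * (v \<bullet> x)) *\<^sub>R v"
        by (simp add: matrix_vector_mult_scaleR Mv mult.commute)
    qed
    finally show ?thesis .
  qed
  have Sx: "S *v x = (\<Sum>v\<in>B. (c v * (v \<bullet> x)) *\<^sub>R v)" for x
    unfolding S_def by (rule smat_mult)
  have SS: "S ** S = M"
  proof -
    have "(S ** S) *v x = M *v x" for x
    proof -
      have "(S ** S) *v x = S *v (S *v x)" by (simp add: matrix_vector_mul_assoc)
      also have "\<dots> = (\<Sum>v\<in>B. (c v * (v \<bullet> (S *v x))) *\<^sub>R v)" by (rule Sx)
      also have "\<dots> = (\<Sum>v\<in>B. (l v * (v \<bullet> x)) *\<^sub>R v)"
      proof (rule sum.cong[OF refl])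
        fix v assume vB: "v \<in> B"
        have nv: "norm v = 1" using un vB by blast
        have "v \<bullet> (S *v x) = v \<bullet> (\<Sum>u\<in>B. (c u * (u \<bullet> x)) *\<^sub>R u)" by (simp only: Sx)
        also have "\<dots> = c v * (v \<bullet> x)" by (rule orth_coef[OF fin po vB nv])
        finally have "v \<bullet> (S *v x) = c v * (v \<bullet> x)" .
        moreover have "c v * c v = l v" unfolding c_def using lpos[OF vB]
          by (simp add: real_sqrt_mult[symmetric])
        ultimately show "(c v * (v \<bullet> (S *v x))) *\<^sub>R v = (l v * (v \<bullet> x)) *\<^sub>R v"
          by (simp add: mult.assoc[symmetric])
      qed
      also have "\<dots> = M *v x" by (rule Mx[symmetric])
      finally show ?thesis .
    qed
    then show ?thesis by (simp add: matrix_eq)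
  qed
  have "spd S"
    unfolding spd_def
  proof (intro conjI allI impI)
    show "transpose S = S" unfolding S_def by (rule smat_transpose)
    fix x :: "real^'m" assume x: "x \<noteq> 0"
    have e: "x \<bullet> (S *v x) = (\<Sum>v\<in>B. c v * (v \<bullet> x)^2)"
      unfolding Sx by (simp add: inner_sum_right power2_eq_square inner_commute mult_ac)
    have "\<exists>v\<in>B. v \<bullet> x \<noteq> 0"
    proof (rule ccontr)
      assume "\<not> (\<exists>v\<in>B. v \<bullet> x \<noteq> 0)"
      then have "\<forall>v\<in>B. v \<bullet> x = 0" by blast
      then have "(\<Sum>v\<in>B. (v \<bullet> x) *\<^sub>R v) = 0" by simp
      then show False using orth_expand[OF po un sp, of x] x by simp
    qed
    then obtain v where vB: "v \<in> B" and vx: "v \<bullet> x \<noteq> 0" by blast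
    have cpos: "c u > 0" if "u \<in> B" for u unfolding c_def using lpos[OF that] by simp
    have "0 < (\<Sum>v\<in>B. c v * (v \<bullet> x)^2)"
    proof (rule sum_pos2[OF fin vB])
      show "0 < c v * (v \<bullet> x)^2" using cpos[OF vB] vx by simp
      fix u assume "u \<in> B" then show "0 \<le> c u * (u \<bullet> x)^2" using cpos by (simp add: less_imp_le)
    qed
    then show "x \<bullet> (S *v x) > 0" using e by simp
  qed
  with SS show ?thesis by blast
qed



lemma sqrt_unique:
  fixes S T :: "real^'m^'m"
  assumes S: "spd S" and T: "spd T" and eq: "S ** S = T ** T"
  shows "S = T"
proof -
  have symS: "transpose S = S" using S unfolding spd_def by blast
  have posS: "\<And>x. x \<noteq> 0 \<Longrightarrow> x \<bullet> (S *v x) > 0" using S unfolding spd_def by blast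
  have posT: "\<And>x. x \<noteq> 0 \<Longrightarrow> x \<bullet> (T *v x) > 0" using T unfolding spd_def by blast
  obtain B where fin: "finite B" and po: "pairwise orthogonal B" and un: "\<forall>v\<in>B. norm v = 1"
    and ev: "\<forall>v\<in>B. S *v v = (v \<bullet> (S *v v)) *\<^sub>R v" and sp: "span B = UNIV"
    using spectral[OF symS] by blast
  have TvSv: "T *v v = S *v v" if vB: "v \<in> B" for v
  proof -
    define m where "m = v \<bullet> (S *v v)"
    have "v \<noteq> 0" using un vB by auto
    then have mpos: "m > 0" unfolding m_def by (rule posS)
    have Sv: "S *v v = m *\<^sub>R v" using ev vB unfolding m_def by blast
    define w where "w = T *v v - m *\<^sub>R v"
    have TTv: "T *v (T *v v) = (m * m) *\<^sub>R v"
    proof -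
      have "T *v (T *v v) = (T ** T) *v v" by (simp add: matrix_vector_mul_assoc)
      also have "\<dots> = (S ** S) *v v" using eq by simp
      also have "\<dots> = S *v (S *v v)" by (simp add: matrix_vector_mul_assoc)
      also have "\<dots> = (m * m) *\<^sub>R v" by (simp add: Sv matrix_vector_mult_scaleR)
      finally show ?thesis .
    qed
    have Tw: "T *v w = - m *\<^sub>R w"
      unfolding w_def by (simp add: matrix_vector_mult_diff_distrib matrix_vector_mult_scaleR TTv algebra_simps)
    have "w = 0"
    proof (rule ccontr)
      assume "w \<noteq> 0"
      then have "w \<bullet> (T *v w) > 0" by (rule posT)
      moreover have "w \<bullet> (T *v w) = - m * (w \<bullet> w)" by (simp add: Tw)
      moreover have "w \<bullet> w \<ge> 0" by simp
      moreover have "m * (w \<bullet> w) \<ge> 0" using mpos \<open>w \<bullet> w \<ge> 0\<close> by simp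
      ultimately show False by linarith
    qed
    then have "T *v v = m *\<^sub>R v" unfolding w_def by simp
    then show ?thesis using Sv by simp
  qed
  have "T *v x = S *v x" for x
  proof -
    have ex: "x = (\<Sum>v\<in>B. (v \<bullet> x) *\<^sub>R v)" by (rule orth_expand[OF po un sp])
    have "T *v x = (\<Sum>v\<in>B. T *v ((v \<bullet> x) *\<^sub>R v))" by (subst ex) (rule mv_sum)
    also have "\<dots> = (\<Sum>v\<in>B. S *v ((v \<bullet> x) *\<^sub>R v))"
      by (rule sum.cong[OF refl]) (simp add: matrix_vector_mult_scaleR TvSv)
    also have "\<dots> = S *v x" by (subst (2) ex) (rule mv_sum[symmetric])
    finally show ?thesis .
  qed
  then show ?thesis by (simp add: matrix_eq)
qed

lemma pd_sqrt:
  fixes M :: "real^'m^'m"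
  assumes "spd M"
  shows "spd (pd_sqrt M)" "pd_sqrt M ** pd_sqrt M = M"
proof -
  have "\<exists>!S. spd S \<and> S ** S = M"
  proof -
    obtain S where "spd S" "S ** S = M" using sqrt_exists[OF assms] by blast
    moreover have "T = S" if "spd T \<and> T ** T = M" for T
      using sqrt_unique[of T S] that calculation by simp
    ultimately show ?thesis by blast
  qed
  from theI'[OF this] show "spd (pd_sqrt M)" "pd_sqrt M ** pd_sqrt M = M"
    unfolding pd_sqrt_def by auto
qed



lemma mm_add_r: "((A::real^'n^'m) + B) ** C = A ** C + B ** C"
  by (simp add: matrix_matrix_mult_def vec_eq_iff sum.distrib[symmetric] algebra_simps)
lemma mm_diff_l: "(A::real^'n^'m) ** (B - C) = A ** B - A ** C"
  by (simp add: matrix_matrix_mult_def vec_eq_iff sum_subtractf[symmetric] algebra_simps)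
lemma mm_diff_r: "((A::real^'n^'m) - B) ** C = A ** C - B ** C"
  by (simp add: matrix_matrix_mult_def vec_eq_iff sum_subtractf[symmetric] algebra_simps)
lemma mm_minus_l: "(A::real^'n^'m) ** (- B) = - (A ** B)"
  by (simp add: matrix_matrix_mult_def vec_eq_iff sum_negf[symmetric])
lemma mm_minus_r: "(- (A::real^'n^'m)) ** B = - (A ** B)"
  by (simp add: matrix_matrix_mult_def vec_eq_iff sum_negf[symmetric])
lemma transpose_diff: "transpose ((A::real^'n^'m) - B) = transpose A - transpose B"
  by (simp add: transpose_def vec_eq_iff)

lemma bb_mm: "bounded_bilinear (\<lambda>(X::real^'n^'m) (Y::real^'p^'n). X ** Y)"
proof -
  have "bilinear (\<lambda>(X::real^'n^'m) (Y::real^'p^'n). X ** Y)"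
    unfolding bilinear_def linear_iff
    by (simp add: matrix_add_ldistrib mm_add_r matrix_scalar_ac scalar_matrix_assoc[symmetric])
  then show ?thesis by (simp add: bilinear_conv_bounded_bilinear)
qed

lemma key_identity:
  fixes X Y C :: "real^'k^'k" and \<tau> :: real
  assumes X: "spd X" and C: "transpose C = C"
    and ode: "\<tau> *\<^sub>R Y = matrix_inv X ** C ** matrix_inv X - X"
  defines "E \<equiv> C - X ** X ** X"
  defines "D \<equiv> X ** X ** Y + (X ** Y + Y ** X) ** X"
  shows "\<tau> * (E \<bullet> (- D) + (- D) \<bullet> E) =
     - 4 * (frob (pd_sqrt X ** E ** matrix_inv (pd_sqrt X)))^2 - 2 * (frob E)^2"
proof -
  define Xi where "Xi = matrix_inv X"
  define S where "S = pd_sqrt X"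
  define Si where "Si = matrix_inv S"
  have invX: "invertible X" using X by (rule spd_invertible)
  have XXi: "X ** Xi = mat 1" and XiX: "Xi ** X = mat 1"
    unfolding Xi_def using invertible_inv[OF invX] by auto
  have Sspd: "spd S" and SS: "S ** S = X" unfolding S_def using pd_sqrt[OF X] by auto
  have invS: "invertible S" using Sspd by (rule spd_invertible)
  have SSi: "S ** Si = mat 1" and SiS: "Si ** S = mat 1"
    unfolding Si_def using invertible_inv[OF invS] by auto
  have symS: "transpose S = S" using Sspd unfolding spd_def by blast
  have symSi: "transpose Si = Si" unfolding Si_def using transpose_inv_sym[OF symS invS] .
  have symX: "transpose X = X" using X unfolding spd_def by blast
  have c1: "Z ** X ** Xi = Z" for Z :: "real^'k^'k"
    by (metis XXi matrix_mul_assoc matrix_mul_rid)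
  have c2: "Z ** Xi ** X = Z" for Z :: "real^'k^'k"
    by (metis XiX matrix_mul_assoc matrix_mul_rid)
  have SiSi: "Si ** Si = Xi"
  proof -
    have "(Si ** Si) ** X = Si ** (Si ** S) ** S" by (simp add: SS[symmetric] matrix_mul_assoc)
    also have "\<dots> = mat 1" by (simp add: SiS)
    finally have "(Si ** Si) ** X = mat 1" .
    from inv_unique[OF this invX] show ?thesis unfolding Xi_def by (rule HOL.sym)
  qed
  have symE: "transpose E = E"
    unfolding E_def by (simp add: transpose_diff matrix_transpose_mul C symX matrix_mul_assoc)
  have c3: "Z ** S ** S = Z ** X" for Z :: "real^'k^'k"
    by (simp add: SS[symmetric] matrix_mul_assoc)
  have c4: "Z ** Si ** Si = Z ** Xi" for Z :: "real^'k^'k"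
    by (simp add: SiSi[symmetric] matrix_mul_assoc)
  have sc: "k *\<^sub>R (A ** B) = A ** (k *\<^sub>R B)" for k and A B :: "real^'k^'k"
    by (simp add: matrix_scalar_ac scalar_matrix_assoc)
  have Z: "\<tau> *\<^sub>R Y = Xi ** E ** Xi"
  proof -
    have "Xi ** E ** Xi = Xi ** C ** Xi - Xi ** (X ** X ** X) ** Xi"
      unfolding E_def by (simp add: mm_diff_l mm_diff_r)
    also have "Xi ** (X ** X ** X) ** Xi = X"
      by (simp add: matrix_mul_assoc XiX c1)
    finally show ?thesis using ode unfolding Xi_def by simp
  qed
  have tD: "\<tau> *\<^sub>R D = X ** X ** (\<tau> *\<^sub>R Y) + (X ** (\<tau> *\<^sub>R Y) + (\<tau> *\<^sub>R Y) ** X) ** X"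
    unfolding D_def by (simp add: scaleR_right_distrib sc[symmetric] scalar_matrix_assoc mm_add_r)
  also have "\<dots> = X ** E ** Xi + E + Xi ** E ** X"
    unfolding Z by (simp add: matrix_mul_assoc mm_add_r matrix_add_ldistrib XXi XiX c1 c2)
  finally have tD2: "\<tau> *\<^sub>R D = X ** E ** Xi + E + Xi ** E ** X" .
  define Tr where "Tr = trace (E ** X ** E ** Xi)"
  have t1: "E \<bullet> (X ** E ** Xi) = Tr"
    unfolding Tr_def inner_trace symE by (simp add: matrix_mul_assoc)
  have t2: "E \<bullet> (Xi ** E ** X) = Tr"
  proof -
    have "E \<bullet> (Xi ** E ** X) = trace ((E ** Xi) ** (E ** X))"
      unfolding inner_trace symE by (simp add: matrix_mul_assoc)
    also have "\<dots> = trace ((E ** X) ** (E ** Xi))" by (rule trace_mul_sym)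
    finally show ?thesis unfolding Tr_def by (simp add: matrix_mul_assoc)
  qed
  have t3: "(frob (S ** E ** Si))^2 = Tr"
  proof -
    have "(frob (S ** E ** Si))^2 = trace (transpose (S ** E ** Si) ** (S ** E ** Si))"
      unfolding frob_sq inner_trace ..
    also have "transpose (S ** E ** Si) = Si ** E ** S"
      by (simp add: matrix_transpose_mul symS symSi symE matrix_mul_assoc)
    also have "trace (Si ** E ** S ** (S ** E ** Si)) = trace (Si ** (E ** S ** S ** E ** Si))"
      by (simp add: matrix_mul_assoc)
    also have "\<dots> = trace ((E ** S ** S ** E ** Si) ** Si)" by (rule trace_mul_sym)
    also have "\<dots> = Tr" unfolding Tr_def by (simp add: matrix_mul_assoc c3 c4)
    finally show ?thesis .
  qed
  have "\<tau> * (E \<bullet> (- D) + (- D) \<bullet> E) = - 2 * (E \<bullet> (\<tau> *\<^sub>R D))"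
    by (simp add: inner_commute)
  also have "\<dots> = - 2 * (E \<bullet> (X ** E ** Xi) + E \<bullet> E + E \<bullet> (Xi ** E ** X))"
    unfolding tD2 by (simp add: inner_add_right)
  also have "\<dots> = - 4 * Tr - 2 * (E \<bullet> E)" unfolding t1 t2 by simp
  moreover have t3': "(frob (pd_sqrt X ** E ** matrix_inv (pd_sqrt X)))^2 = Tr"
    using t3 unfolding S_def Si_def .
  ultimately show ?thesis unfolding t3' frob_sq[of E] by simp
qed



theorem mainTheorem10:
  fixes A :: "real^'n^'n" and W :: "real^'n^'k" and \<tau> :: real
    and M M' :: "real \<Rightarrow> real^'k^'k" and T :: "real set"
  assumes dims: "CARD('n) > CARD('k)"
    and A_spd: "spd A"
    and tau_pos: "\<tau> > 0"
    and T_int: "is_interval T" and zero_T: "0 \<in> T"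
    and M_deriv: "\<And>t. t \<in> T \<Longrightarrow> (M has_vector_derivative M' t) (at t within T)"
    and M'_cont: "continuous_on T M'"
    and M_spd: "\<And>t. t \<in> T \<Longrightarrow> spd (M t)"
    and ode: "\<And>t. t \<in> T \<Longrightarrow>
        \<tau> *\<^sub>R M' t = matrix_inv (M t) ** W ** A ** transpose W ** matrix_inv (M t) - M t"
  shows "(\<forall>t\<in>T. ((\<lambda>s. \<tau> * L0 A W (M s)) has_real_derivative
            (- 4 * (frob (pd_sqrt (M t) ** (W ** A ** transpose W - M t ** M t ** M t)
                          ** matrix_inv (pd_sqrt (M t))))^2
             - 2 * L0 A W (M t))) (at t within T))
       \<and> (\<forall>t\<in>T. t \<ge> 0 \<longrightarrow> L0 A W (M t) \<le> L0 A W (M 0) * exp (- 2 * t / \<tau>))"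
proof -
  define C where "C = W ** A ** transpose W"
  have symA: "transpose A = A" using A_spd unfolding spd_def by blast
  have symC: "transpose C = C"
    unfolding C_def by (simp add: matrix_transpose_mul symA matrix_mul_assoc)
  define E where "E s = C - M s ** M s ** M s" for s
  define D where "D t = M t ** M t ** M' t + (M t ** M' t + M' t ** M t) ** M t" for t
  define F where "F t = frob (pd_sqrt (M t) ** (W ** A ** transpose W - M t ** M t ** M t)
                          ** matrix_inv (pd_sqrt (M t)))" for t
  have L: "L0 A W (M s) = E s \<bullet> E s" for s
    unfolding L0_def E_def C_def frob_sq ..
  have dL: "((\<lambda>s. E s \<bullet> E s) has_real_derivative (E t \<bullet> (- D t) + (- D t) \<bullet> E t)) (at t within T)"
    if tT: "t \<in> T" for t
  proof -
    have dM: "(M has_vector_derivative M' t) (at t within T)" using M_deriv[OF tT] .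
    have d2: "((\<lambda>s. M s ** M s) has_vector_derivative (M t ** M' t + M' t ** M t)) (at t within T)"
      using bounded_bilinear.has_vector_derivative[OF bb_mm dM dM] by simp
    have d3: "((\<lambda>s. M s ** M s ** M s) has_vector_derivative D t) (at t within T)"
      using bounded_bilinear.has_vector_derivative[OF bb_mm d2 dM] unfolding D_def by simp
    have dE: "(E has_vector_derivative - D t) (at t within T)"
      unfolding E_def using has_vector_derivative_diff[OF has_vector_derivative_const d3] by simp
    have "((\<lambda>s. E s \<bullet> E s) has_vector_derivative (E t \<bullet> (- D t) + (- D t) \<bullet> E t)) (at t within T)"
      using bounded_bilinear.has_vector_derivative[OF bounded_bilinear_inner dE dE] by simp
    then show ?thesis by (simp add: has_real_derivative_iff_has_vector_derivative)
  qed
  have val: "\<tau> * (E t \<bullet> (- D t) + (- D t) \<bullet> E t) = - 4 * (F t)^2 - 2 * L0 A W (M t)"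
    if tT: "t \<in> T" for t
  proof -
    have o: "\<tau> *\<^sub>R M' t = matrix_inv (M t) ** C ** matrix_inv (M t) - M t"
      using ode[OF tT] unfolding C_def by (simp add: matrix_mul_assoc)
    from key_identity[OF M_spd[OF tT] symC o]
    show ?thesis unfolding F_def L0_def E_def D_def C_def .
  qed
  have part1: "((\<lambda>s. \<tau> * L0 A W (M s)) has_real_derivative (- 4 * (F t)^2 - 2 * L0 A W (M t))) (at t within T)"
    if tT: "t \<in> T" for t
  proof -
    have "((\<lambda>s. \<tau> * (E s \<bullet> E s)) has_real_derivative \<tau> * (E t \<bullet> (- D t) + (- D t) \<bullet> E t)) (at t within T)"
      by (rule DERIV_cmult[OF dL[OF tT]])
    then show ?thesis by (simp only: L val[OF tT])
  qed
  have part2: "L0 A W (M t) \<le> L0 A W (M 0) * exp (- 2 * t / \<tau>)" if tT: "t \<in> T" and t0: "t \<ge> 0" for t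
  proof -
    define g where "g s = L0 A W (M s) * exp (2 / \<tau> * s)" for s
    define g' where "g' s = (E s \<bullet> (- D s) + (- D s) \<bullet> E s) * exp (2 / \<tau> * s) + (2 / \<tau> * exp (2 / \<tau> * s)) * L0 A W (M s)" for s
    have dg: "(g has_real_derivative g' s) (at s within T)" if sT: "s \<in> T" for s
    proof -
      have d1: "((\<lambda>s. L0 A W (M s)) has_real_derivative (E s \<bullet> (- D s) + (- D s) \<bullet> E s)) (at s within T)"
        using dL[OF sT] by (simp only: L)
      have h: "((\<lambda>s. 2 / \<tau> * s) has_real_derivative 2 / \<tau>) (at s within T)"
        by (rule DERIV_cmult_Id)
      have d2': "((\<lambda>s. exp (2 / \<tau> * s)) has_real_derivative exp (2 / \<tau> * s) * (2 / \<tau>)) (at s within T)"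
        by (rule DERIV_chain2[OF DERIV_exp h])
      have d2: "((\<lambda>s. exp (2 / \<tau> * s)) has_real_derivative (2 / \<tau> * exp (2 / \<tau> * s))) (at s within T)"
        using d2' by (simp only: mult.commute)
      show ?thesis unfolding g_def g'_def by (rule DERIV_mult[OF d1 d2])
    qed
    have g'nonpos: "g' s \<le> 0" if sT: "s \<in> T" for s
    proof -
      have "\<tau> * g' s = (\<tau> * (E s \<bullet> (- D s) + (- D s) \<bullet> E s) + 2 * L0 A W (M s)) * exp (2 / \<tau> * s)"
      proof -
        have r: "tt * (a * e + 2 / tt * e * l) = (tt * a + 2 * l) * e" if "tt \<noteq> 0" for tt a e l :: real
          using that by (simp add: field_simps)
        show ?thesis unfolding g'_def by (rule r) (use tau_pos in simp)
      qed
      also have "\<dots> = (- 4 * (F s)^2) * exp (2 / \<tau> * s)" unfolding val[OF sT] by simp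
      also have "\<dots> \<le> 0" by (simp add: mult_nonpos_nonneg)
      finally have "\<tau> * g' s \<le> 0" .
      then show ?thesis using tau_pos by (simp add: mult_le_0_iff)
    qed
    have iv: "\<forall>a\<in>T. \<forall>b\<in>T. \<forall>x. a \<le> x \<and> x \<le> b \<longrightarrow> x \<in> T"
      using T_int by (simp only: is_interval_1)
    have sub: "{0..t} \<subseteq> T"
    proof
      fix x assume "x \<in> {0..t}"
      then have "0 \<le> x \<and> x \<le> t" by simp
      then show "x \<in> T" using iv zero_T tT by blast
    qed
    have "{0<..<t} \<subseteq> interior T"
      by (rule interior_maximal) (use sub in auto)
    have "g t \<le> g 0"
    proof (rule DERIV_nonpos_imp_decreasing_open[OF t0])
      fix x assume x: "0 < x" "x < t"
      then have "x \<in> interior T" using \<open>{0<..<t} \<subseteq> interior T\<close> by auto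
      then have "at x within T = at x" by (rule at_within_interior)
      moreover have xT: "x \<in> T" using x sub by auto
      ultimately have "DERIV g x :> g' x" using dg[OF xT] by simp
      then show "\<exists>y. DERIV g x :> y \<and> y \<le> 0" using g'nonpos[OF xT] by blast
    next
      show "continuous_on {0..t} g"
      proof (rule DERIV_continuous_on)
        fix x assume "x \<in> {0..t}"
        then have xT: "x \<in> T" using sub by auto
        show "(g has_field_derivative g' x) (at x within {0..t})"
          by (rule has_field_derivative_subset[OF dg[OF xT] sub])
      qed
    qed
    then have "L0 A W (M t) * exp (2 / \<tau> * t) \<le> L0 A W (M 0)" unfolding g_def by simp
    then have "L0 A W (M t) * exp (2 / \<tau> * t) * exp (- 2 * t / \<tau>) \<le> L0 A W (M 0) * exp (- 2 * t / \<tau>)"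
      by (rule mult_right_mono) simp
    moreover have ee: "exp (2 / \<tau> * t) * exp (- 2 * t / \<tau>) = 1"
    proof -
      have "2 / \<tau> * t + - 2 * t / \<tau> = 0" by (simp add: field_simps)
      then show ?thesis by (simp add: exp_add[symmetric])
    qed
    moreover have "L0 A W (M t) = L0 A W (M t) * exp (2 / \<tau> * t) * exp (- 2 * t / \<tau>)"
      by (simp only: mult.assoc ee mult_1_right)
    ultimately show ?thesis by linarith
  qed
  show ?thesis using part1 part2 unfolding F_def by blast
qed

end
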